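(* Let $\varepsilon>0$, $\beta\in(0,1)$, $\delta\in(0,1)$, and let $G$ be a graph with at least one edge. Run: set $T=-\frac{8}{\varepsilon}\ln\frac4\beta$, $\tilde T=T+\mathrm{Lap}(4/\varepsilon)$; for $\tau=1,2,4,8,\dots$ compute $\tilde Q_\tau=Q_{\mathrm{Del\text{-}N}}(G,\tau)+\mathrm{Lap}(4/\varepsilon)$ and stop at the first $\tau$ with $\tilde Q_\tau>\tilde T$; then output $$\tau^*=\tau+|Q_{\mathrm{Del\text{-}N}}(G,\tau)|+\mathrm{Lap}(2/\varepsilon)+\frac2\varepsilon\ln\max\Big(\frac1\delta,\frac2\beta\Big)+1.$$ Then with probability at least $1-\beta$, $$\tau^*\le2\deg(G)+\frac8\varepsilon\ln\log(4\deg(G))+\frac{16}{\varepsilon}\ln\frac4\beta+\frac4\varepsilon\ln\max\Big(\frac1\delta,\frac2\beta\Big)+1$$ and $$N_{\tau^*}(G)\le\frac8\varepsilon\ln\log(4\deg(G))+\frac{16}\varepsilon\ln\frac4\beta.$$ Furthermore, with probability at least $1-\delta$, $\tau^*+N_{\tau^*}(G)\le2\tau^*$.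
   Context: Graphs are finite, simple, undirected; $\deg(G)$ is the maximum degree; $N_t(G)$ is the number of nodes of $G$ of degree at least $t$. $H\subseteq G$ means $H$ is obtained from $G$ by deleting a set of nodes with all their incident edges. $Q_{\mathrm{Del\text{-}N}}(G,\tau)=-\min\{|V(G)|-|V(G^* )|: G^*\subseteq G,\ \deg(G^* )\le\tau\}$. $\mathrm{Lap}(b)$ has density $\frac1{2b}e^{-|x|/b}$; all draws are independent. $\ln$ is the natural logarithm and $\log$ the base-2 logarithm (counting the doubling steps $\tau=1,2,4,\dots$). *)

theory Defs
  imports "HOL-Probability.Probability"
begin

definition simple_graph :: "'v set \<Rightarrow> ('v \<Rightarrow> 'v \<Rightarrow> bool) \<Rightarrow> bool" where
  "simple_graph V E \<longleftrightarrow> finite V \<and> (\<forall>u v. E u v \<longrightarrow> u \<in> V \<and> v \<in> V)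
     \<and> (\<forall>u v. E u v \<longrightarrow> E v u) \<and> (\<forall>v. \<not> E v v)"

definition has_edge :: "'v set \<Rightarrow> ('v \<Rightarrow> 'v \<Rightarrow> bool) \<Rightarrow> bool" where
  "has_edge V E \<longleftrightarrow> (\<exists>u\<in>V. \<exists>v\<in>V. E u v)"

definition deg_in :: "('v \<Rightarrow> 'v \<Rightarrow> bool) \<Rightarrow> 'v set \<Rightarrow> 'v \<Rightarrow> nat" where
  "deg_in E S v = card {w \<in> S. E v w}"

definition max_deg :: "('v \<Rightarrow> 'v \<Rightarrow> bool) \<Rightarrow> 'v set \<Rightarrow> nat" where
  "max_deg E S = Max (insert 0 (deg_in E S ` S))"

definition N_deg :: "'v set \<Rightarrow> ('v \<Rightarrow> 'v \<Rightarrow> bool) \<Rightarrow> real \<Rightarrow> nat" where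
  "N_deg V E t = card {v \<in> V. real (deg_in E V v) \<ge> t}"

definition Q_DelN :: "'v set \<Rightarrow> ('v \<Rightarrow> 'v \<Rightarrow> bool) \<Rightarrow> nat \<Rightarrow> int" where
  "Q_DelN V E \<tau> = - int (Min {card V - card S | S. S \<subseteq> V \<and> max_deg E S \<le> \<tau>})"

definition lap_density :: "real \<Rightarrow> real \<Rightarrow> real" where
  "lap_density b x = exp (- \<bar>x\<bar> / b) / (2 * b)"

(* The algorithm, as a function of the noise values z:
   z 0      : threshold noise  ~ Lap(4/eps)
   z 1      : final noise      ~ Lap(2/eps)
   z (k+2)  : noise of the k-th query (tau = 2^k) ~ Lap(4/eps) *)
definition alg_threshold :: "real \<Rightarrow> real \<Rightarrow> real" where
  "alg_threshold \<epsilon> \<beta> = - (8 / \<epsilon>) * ln (4 / \<beta>)"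

definition alg_stop :: "'v set \<Rightarrow> ('v \<Rightarrow> 'v \<Rightarrow> bool) \<Rightarrow> real \<Rightarrow> real \<Rightarrow> (nat \<Rightarrow> real) \<Rightarrow> nat" where
  "alg_stop V E \<epsilon> \<beta> z =
     (LEAST k. real_of_int (Q_DelN V E (2 ^ k)) + z (k + 2) > alg_threshold \<epsilon> \<beta> + z 0)"

definition alg_tau_star :: "'v set \<Rightarrow> ('v \<Rightarrow> 'v \<Rightarrow> bool) \<Rightarrow> real \<Rightarrow> real \<Rightarrow> real \<Rightarrow> (nat \<Rightarrow> real) \<Rightarrow> real" where
  "alg_tau_star V E \<epsilon> \<beta> \<delta> z =
     (let \<tau> = 2 ^ alg_stop V E \<epsilon> \<beta> z in
      real \<tau> + \<bar>real_of_int (Q_DelN V E \<tau>)\<bar> + z 1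
        + (2 / \<epsilon>) * ln (max (1 / \<delta>) (2 / \<beta>)) + 1)"

end

theory Submission
  imports Defs
begin


lemma lap_upper_integral:
  fixes b t :: real assumes b: "b > 0" and t: "t \<ge> 0"
  shows "(\<integral>\<^sup>+x. ennreal (lap_density b x) * indicator {t..} x \<partial>lborel) = ennreal (exp (- t / b) / 2)"
proof -
  have "(\<integral>\<^sup>+x. ennreal (lap_density b x) * indicator {t..} x \<partial>lborel)
      = (\<integral>\<^sup>+x. ennreal (exp (-(1/b)*x) / (2*b)) * indicator {t..} x \<partial>lborel)"
    using t by (intro nn_integral_cong) (auto simp: lap_density_def indicator_def)
  also have "\<dots> = ennreal (exp (-(1/b)*t) / (1/b) / (2*b))"
  proof (rule nn_integral_has_integral_lebesgue')
    show "((\<lambda>x. exp (-(1/b)*x) / (2*b)) has_integral exp (-(1/b)*t) / (1/b) / (2*b)) {t..}"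
      using has_integral_exp_minus_to_infinity[of "1/b" t] b
      by (intro has_integral_divide) auto
  qed (use b in auto)
  also have "exp (-(1/b)*t) / (1/b) / (2*b) = exp (- t / b) / 2" using b by simp
  finally show ?thesis .
qed

lemma lap_lower_integral:
  fixes b t :: real assumes b: "b > 0" and t: "t \<ge> 0"
  shows "(\<integral>\<^sup>+x. ennreal (lap_density b x) * indicator {..-t} x \<partial>lborel) = ennreal (exp (- t / b) / 2)"
proof -
  have "(\<integral>\<^sup>+x. ennreal (lap_density b x) * indicator {..-t} x \<partial>lborel)
     = (\<integral>\<^sup>+x. ennreal (lap_density b x) * indicator {..-t} x \<partial>(distr lborel borel uminus))"
    by (simp add: lborel_distr_uminus)
  also have "\<dots> = (\<integral>\<^sup>+x. ennreal (lap_density b (-x)) * indicator {..-t} (-x) \<partial>lborel)"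
    by (subst nn_integral_distr) (auto simp: lap_density_def)
  also have "\<dots> = (\<integral>\<^sup>+x. ennreal (lap_density b x) * indicator {t..} x \<partial>lborel)"
    by (intro nn_integral_cong) (auto simp: lap_density_def indicator_def)
  finally show ?thesis using lap_upper_integral[OF b t] by simp
qed

lemma (in prob_space) lap_upper_tail:
  assumes D: "distributed M lborel X (\<lambda>x. ennreal (lap_density b x))" and b: "b > 0" and t: "t \<ge> 0"
  shows "prob {w \<in> space M. X w \<ge> t} = exp (- t / b) / 2"
proof -
  have "emeasure M (X -` {t..} \<inter> space M) = ennreal (exp (- t / b) / 2)"
    using distributed_emeasure[OF D, of "{t..}"] lap_upper_integral[OF b t] by simp
  moreover have "X -` {t..} \<inter> space M = {w \<in> space M. X w \<ge> t}" by auto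
  ultimately show ?thesis by (simp add: measure_def)
qed

lemma (in prob_space) lap_lower_tail:
  assumes D: "distributed M lborel X (\<lambda>x. ennreal (lap_density b x))" and b: "b > 0" and t: "t \<ge> 0"
  shows "prob {w \<in> space M. X w \<le> -t} = exp (- t / b) / 2"
proof -
  have "emeasure M (X -` {..-t} \<inter> space M) = ennreal (exp (- t / b) / 2)"
    using distributed_emeasure[OF D, of "{..-t}"] lap_lower_integral[OF b t] by simp
  moreover have "X -` {..-t} \<inter> space M = {w \<in> space M. X w \<le> -t}" by auto
  ultimately show ?thesis by (simp add: measure_def)
qed



lemma max_deg_empty: "max_deg E {} = 0" by (simp add: max_deg_def)

lemma deg_le_max_deg: assumes "finite S" "v \<in> S" shows "deg_in E S v \<le> max_deg E S"
  unfolding max_deg_def using assms by (intro Max_ge) auto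

lemma Q_DelN_witness:
  assumes fin: "finite V"
  shows "\<exists>S. S \<subseteq> V \<and> max_deg E S \<le> \<tau> \<and> card V - card S = nat (- Q_DelN V E \<tau>) \<and> Q_DelN V E \<tau> \<le> 0"
proof -
  define A where "A = {card V - card S | S. S \<subseteq> V \<and> max_deg E S \<le> \<tau>}"
  have "card V - card {} \<in> A" unfolding A_def using max_deg_empty[of E] by force
  hence ne: "A \<noteq> {}" by blast
  have "A \<subseteq> {..card V}" unfolding A_def by auto
  hence "finite A" using finite_subset by blast
  hence "Min A \<in> A" using ne by (rule Min_in)
  then obtain S where S: "S \<subseteq> V" "max_deg E S \<le> \<tau>" "Min A = card V - card S" unfolding A_def by blast
  have Q: "Q_DelN V E \<tau> = - int (Min A)" unfolding Q_DelN_def A_def by simp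
  show ?thesis using S Q by (intro exI[of _ S]) auto
qed

lemma Q_DelN_zero:
  assumes fin: "finite V" and "max_deg E V \<le> \<tau>"
  shows "Q_DelN V E \<tau> = 0"
proof -
  define A where "A = {card V - card S | S. S \<subseteq> V \<and> max_deg E S \<le> \<tau>}"
  have "0 \<in> A" unfolding A_def using assms by force
  have "A \<subseteq> {..card V}" unfolding A_def by auto
  hence "finite A" using finite_subset by blast
  hence "Min A = 0" using \<open>0 \<in> A\<close> by (meson Min_le le_zero_eq)
  thus ?thesis unfolding Q_DelN_def A_def[symmetric] by simp
qed

lemma N_deg_le_Q:
  assumes fin: "finite V" and t: "t > real \<tau> + \<bar>real_of_int (Q_DelN V E \<tau>)\<bar>"
  shows "real (N_deg V E t) \<le> \<bar>real_of_int (Q_DelN V E \<tau>)\<bar>"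
proof -
  obtain S where S: "S \<subseteq> V" "max_deg E S \<le> \<tau>" "card V - card S = nat (- Q_DelN V E \<tau>)"
    and Q0: "Q_DelN V E \<tau> \<le> 0" using Q_DelN_witness[OF fin] by blast
  define q where "q = nat (- Q_DelN V E \<tau>)"
  have absq: "\<bar>real_of_int (Q_DelN V E \<tau>)\<bar> = real q" unfolding q_def using Q0 by simp
  have finS: "finite S" using S(1) fin finite_subset by blast
  have cardD: "card (V - S) = q" using S fin finS unfolding q_def by (simp add: card_Diff_subset)
  have sub: "{v \<in> V. real (deg_in E V v) \<ge> t} \<subseteq> V - S"
  proof
    fix v assume v: "v \<in> {v \<in> V. real (deg_in E V v) \<ge> t}"
    show "v \<in> V - S"
    proof (rule ccontr)
      assume "v \<notin> V - S" hence vS: "v \<in> S" using v by auto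
      have "{w \<in> V. E v w} \<subseteq> {w \<in> S. E v w} \<union> (V - S)" by auto
      hence "deg_in E V v \<le> card ({w \<in> S. E v w} \<union> (V - S))"
        unfolding deg_in_def using fin finS by (intro card_mono) auto
      also have "\<dots> \<le> card {w \<in> S. E v w} + card (V - S)" by (rule card_Un_le)
      also have "\<dots> \<le> \<tau> + q" using deg_le_max_deg[OF finS vS, of E] S(2) cardD
        unfolding deg_in_def by simp
      finally have "real (deg_in E V v) \<le> real \<tau> + real q" by linarith
      thus False using v t absq by auto
    qed
  qed
  have "N_deg V E t \<le> card (V - S)" unfolding N_deg_def using fin by (intro card_mono[OF _ sub]) auto
  thus ?thesis using cardD absq by simp
qed

lemma max_deg_pos:
  assumes "simple_graph V E" "has_edge V E" shows "max_deg E V \<ge> 1"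
proof -
  have fin: "finite V" using assms(1) unfolding simple_graph_def by auto
  obtain u v where uv: "u \<in> V" "v \<in> V" "E u v" using assms(2) unfolding has_edge_def by auto
  have "1 \<le> deg_in E V u" unfolding deg_in_def using uv fin
    by (metis (mono_tags, lifting) One_nat_def Suc_leI card_gt_0_iff empty_iff finite_subset mem_Collect_eq subsetI)
  also have "\<dots> \<le> max_deg E V" by (rule deg_le_max_deg[OF fin uv(1)])
  finally show ?thesis .
qed



lemma det_second:
  assumes fin: "finite V"
    and z1: "z 1 > - ((2/\<epsilon>) * ln (max (1/\<delta>) (2/\<beta>)) + 1)"
  shows "alg_tau_star V E \<epsilon> \<beta> \<delta> z + real (N_deg V E (alg_tau_star V E \<epsilon> \<beta> \<delta> z))
          \<le> 2 * alg_tau_star V E \<epsilon> \<beta> \<delta> z"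
proof -
  define \<tau> :: nat where "\<tau> = 2 ^ alg_stop V E \<epsilon> \<beta> z"
  have ts: "alg_tau_star V E \<epsilon> \<beta> \<delta> z = real \<tau> + \<bar>real_of_int (Q_DelN V E \<tau>)\<bar> + z 1
        + (2 / \<epsilon>) * ln (max (1 / \<delta>) (2 / \<beta>)) + 1"
    unfolding alg_tau_star_def \<tau>_def Let_def by simp
  have gt: "alg_tau_star V E \<epsilon> \<beta> \<delta> z > real \<tau> + \<bar>real_of_int (Q_DelN V E \<tau>)\<bar>"
    using ts z1 by linarith
  have "real (N_deg V E (alg_tau_star V E \<epsilon> \<beta> \<delta> z)) \<le> \<bar>real_of_int (Q_DelN V E \<tau>)\<bar>"
    by (rule N_deg_le_Q[OF fin gt])
  thus ?thesis using gt by linarith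
qed

lemma det_first:
  assumes G: "simple_graph V E" "has_edge V E"
    and eps: "\<epsilon> > 0" and bet: "0 < \<beta>" "\<beta> < 1" and del: "0 < \<delta>" "\<delta> < 1"
    and k0: "k0 = (LEAST k. max_deg E V \<le> 2 ^ k)"
    and a: "a = (4/\<epsilon>) * ln (4/\<beta>)"
    and m: "m = max (1/\<delta>) (2/\<beta>)"
    and g1: "- a < z 0" "z 0 < a"
    and g2: "z (k0 + 2) > - a"
    and g3: "\<And>k. k \<le> k0 \<Longrightarrow> z (k + 2) < (8/\<epsilon>) * ln (real k0 + 1) + a"
    and g4: "z 1 > - ((2/\<epsilon>) * ln m + 1)" "z 1 < (2/\<epsilon>) * ln m"
  shows "alg_tau_star V E \<epsilon> \<beta> \<delta> z
              \<le> 2 * real (max_deg E V) + (8 / \<epsilon>) * ln (log 2 (4 * real (max_deg E V)))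
                 + (16 / \<epsilon>) * ln (4 / \<beta>) + (4 / \<epsilon>) * ln (max (1 / \<delta>) (2 / \<beta>)) + 1
            \<and> real (N_deg V E (alg_tau_star V E \<epsilon> \<beta> \<delta> z))
              \<le> (8 / \<epsilon>) * ln (log 2 (4 * real (max_deg E V))) + (16 / \<epsilon>) * ln (4 / \<beta>)"
proof -
  have fin: "finite V" using G(1) unfolding simple_graph_def by auto
  define D where "D = max_deg E V"
  have D1: "D \<ge> 1" unfolding D_def by (rule max_deg_pos[OF G])
  have exk: "\<exists>k. D \<le> 2 ^ k" using less_exp[of D] by (meson less_imp_le)
  have Dk0: "D \<le> 2 ^ k0" unfolding k0 D_def[symmetric] using exk by (rule LeastI_ex)
  have k0min: "\<And>k. k < k0 \<Longrightarrow> \<not> D \<le> 2 ^ k" unfolding k0 D_def[symmetric] by (rule not_less_Least)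
  have twok0: "2 ^ k0 \<le> 2 * D"
  proof (cases k0)
    case 0 then show ?thesis using D1 by simp
  next
    case (Suc j) then have "\<not> D \<le> 2 ^ j" using k0min by auto
    then show ?thesis using Suc by simp
  qed
  define T where "T = alg_threshold \<epsilon> \<beta>"
  have T: "T = - 2 * a" unfolding T_def alg_threshold_def a by simp
  define P where "P k \<longleftrightarrow> real_of_int (Q_DelN V E (2 ^ k)) + z (k + 2) > T + z 0" for k
  have Qk0: "Q_DelN V E (2 ^ k0) = 0" using Q_DelN_zero[OF fin] Dk0 D_def by simp
  have "P k0" unfolding P_def Qk0 T using g1 g2 by simp
  define s where "s = alg_stop V E \<epsilon> \<beta> z"
  have s: "s = (LEAST k. P k)" unfolding s_def alg_stop_def P_def T_def by simp
  have Ps: "P s" unfolding s using \<open>P k0\<close> by (rule LeastI)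
  have sk0: "s \<le> k0" unfolding s using \<open>P k0\<close> by (rule Least_le)
  define \<tau> :: nat where "\<tau> = 2 ^ s"
  have ts: "alg_tau_star V E \<epsilon> \<beta> \<delta> z = real \<tau> + \<bar>real_of_int (Q_DelN V E \<tau>)\<bar> + z 1
        + (2 / \<epsilon>) * ln m + 1"
    unfolding alg_tau_star_def \<tau>_def Let_def s_def m by simp
  obtain S where "S \<subseteq> V" and Q0: "Q_DelN V E \<tau> \<le> 0" using Q_DelN_witness[OF fin] by blast
  have ln_pos: "ln (4/\<beta>) \<ge> 0" using bet by simp
  have apos: "a \<ge> 0" unfolding a using eps ln_pos by simp
  have "real (2^k0) \<le> real (2*D)" using twok0 by (rule of_nat_mono)
  hence r2: "(2::real)^k0 \<le> 2 * real D" by simp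
  have "4 * real D \<ge> 2 ^ (k0 + 1)" using r2 by simp
  hence "log 2 (4 * real D) \<ge> log 2 (2 ^ (k0 + 1))" using D1 by (subst log_le_cancel_iff) auto
  moreover have "log 2 ((2::real) ^ (k0 + 1)) = real (k0 + 1)" by (rule log_pow_cancel) auto
  ultimately have Lk: "log 2 (4 * real D) \<ge> real k0 + 1" by simp
  hence lnL: "ln (real k0 + 1) \<le> ln (log 2 (4 * real D))" by (subst ln_le_cancel_iff) auto
  define B where "B = (8 / \<epsilon>) * ln (log 2 (4 * real D)) + (16 / \<epsilon>) * ln (4 / \<beta>)"
  have "\<bar>real_of_int (Q_DelN V E \<tau>)\<bar> < z (s + 2) - z 0 - T"
    using Ps Q0 unfolding P_def \<tau>_def by simp
  also have "\<dots> < (8/\<epsilon>) * ln (real k0 + 1) + a + a + 2 * a" using g3[OF sk0] g1 T by simp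
  also have "\<dots> \<le> B" unfolding B_def a using lnL eps
    by (simp add: divide_right_mono mult_left_mono)
  finally have QB: "\<bar>real_of_int (Q_DelN V E \<tau>)\<bar> < B" .
  have gt: "alg_tau_star V E \<epsilon> \<beta> \<delta> z > real \<tau> + \<bar>real_of_int (Q_DelN V E \<tau>)\<bar>"
    using ts g4 by linarith
  have N: "real (N_deg V E (alg_tau_star V E \<epsilon> \<beta> \<delta> z)) \<le> \<bar>real_of_int (Q_DelN V E \<tau>)\<bar>"
    by (rule N_deg_le_Q[OF fin gt])
  have "\<tau> \<le> 2 ^ k0" unfolding \<tau>_def using sk0 by (simp add: power_increasing)
  hence "real \<tau> \<le> (2::real) ^ k0" by (metis of_nat_mono of_nat_numeral of_nat_power)
  hence tau: "real \<tau> \<le> 2 * real D" using r2 by linarith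
  have "alg_tau_star V E \<epsilon> \<beta> \<delta> z \<le> 2 * real D + B + (4/\<epsilon>) * ln m + 1"
    using ts tau QB g4 by simp
  thus ?thesis using N QB unfolding B_def D_def m by simp
qed



lemma real_N_deg_sum: assumes "finite V" shows "real (N_deg V E t) = (\<Sum>v\<in>V. if t \<le> real (deg_in E V v) then 1 else 0)"
proof -
  have "(\<Sum>v\<in>V. if t \<le> real (deg_in E V v) then 1 else 0) = (\<Sum>v\<in>{v\<in>V. t \<le> real (deg_in E V v)}. (1::real))"
    using assms by (rule sum.inter_filter[symmetric])
  thus ?thesis unfolding N_deg_def by simp
qed

lemma N_deg_measurable:
  assumes "finite V" and [measurable]: "f \<in> borel_measurable M"
  shows "(\<lambda>w. real (N_deg V E (f w))) \<in> borel_measurable M"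
  unfolding real_N_deg_sum[OF assms(1)] by measurable

lemma frac_sq: "(n::real) > 0 \<Longrightarrow> n * (x / n^2) = x / n"
  by (simp add: power2_eq_square)

theorem mainTheorem5:
  fixes M :: "'w measure" and Z :: "nat \<Rightarrow> 'w \<Rightarrow> real"
    and V :: "'v set" and E :: "'v \<Rightarrow> 'v \<Rightarrow> bool"
    and \<epsilon> \<beta> \<delta> :: real
  assumes "prob_space M"
    and "prob_space.indep_vars M (\<lambda>_. borel) Z UNIV"
    and "distributed M lborel (Z 0) (\<lambda>x. ennreal (lap_density (4 / \<epsilon>) x))"
    and "distributed M lborel (Z 1) (\<lambda>x. ennreal (lap_density (2 / \<epsilon>) x))"
    and "\<And>k. distributed M lborel (Z (k + 2)) (\<lambda>x. ennreal (lap_density (4 / \<epsilon>) x))"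
    and "\<epsilon> > 0" and "0 < \<beta>" and "\<beta> < 1" and "0 < \<delta>" and "\<delta> < 1"
    and "simple_graph V E" and "has_edge V E"
  shows "measure M {w \<in> space M.
            alg_tau_star V E \<epsilon> \<beta> \<delta> (\<lambda>i. Z i w)
              \<le> 2 * real (max_deg E V) + (8 / \<epsilon>) * ln (log 2 (4 * real (max_deg E V)))
                 + (16 / \<epsilon>) * ln (4 / \<beta>) + (4 / \<epsilon>) * ln (max (1 / \<delta>) (2 / \<beta>)) + 1
            \<and> real (N_deg V E (alg_tau_star V E \<epsilon> \<beta> \<delta> (\<lambda>i. Z i w)))
              \<le> (8 / \<epsilon>) * ln (log 2 (4 * real (max_deg E V))) + (16 / \<epsilon>) * ln (4 / \<beta>)}
           \<ge> 1 - \<beta>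
       \<and> measure M {w \<in> space M.
            alg_tau_star V E \<epsilon> \<beta> \<delta> (\<lambda>i. Z i w)
              + real (N_deg V E (alg_tau_star V E \<epsilon> \<beta> \<delta> (\<lambda>i. Z i w)))
            \<le> 2 * alg_tau_star V E \<epsilon> \<beta> \<delta> (\<lambda>i. Z i w)} \<ge> 1 - \<delta>"
proof -
  interpret prob_space M by fact
  note D0 = assms(3) and D1 = assms(4) and D2 = assms(5)
  note eps = assms(6) and bet = assms(7,8) and del = assms(9,10) and G = assms(11,12)
  have fin: "finite V" using G(1) unfolding simple_graph_def by auto
  have Zm[measurable]: "Z i \<in> borel_measurable M" for i
  proof -
    consider "i = 0" | "i = 1" | j where "i = j + 2"
      by (metis One_nat_def add_2_eq_Suc' not0_implies_Suc)
    then show ?thesis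
      using distributed_measurable[OF D0] distributed_measurable[OF D1] distributed_measurable[OF D2]
      by cases auto
  qed
  have stop_m: "(\<lambda>w. alg_stop V E \<epsilon> \<beta> (\<lambda>i. Z i w)) \<in> measurable M (count_space UNIV)"
    unfolding alg_stop_def by measurable
  define f where "f w = alg_tau_star V E \<epsilon> \<beta> \<delta> (\<lambda>i. Z i w)" for w
  have f_m[measurable]: "f \<in> borel_measurable M"
  proof -
    have "(\<lambda>w. (\<lambda>s w. real (2 ^ s) + \<bar>real_of_int (Q_DelN V E (2 ^ s))\<bar> + Z 1 w
        + (2 / \<epsilon>) * ln (max (1 / \<delta>) (2 / \<beta>)) + 1) (alg_stop V E \<epsilon> \<beta> (\<lambda>i. Z i w)) w) \<in> borel_measurable M"
      by (rule measurable_compose_countable[OF _ stop_m]) measurable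
    moreover have "f = (\<lambda>w. (\<lambda>s w. real (2 ^ s) + \<bar>real_of_int (Q_DelN V E (2 ^ s))\<bar> + Z 1 w
        + (2 / \<epsilon>) * ln (max (1 / \<delta>) (2 / \<beta>)) + 1) (alg_stop V E \<epsilon> \<beta> (\<lambda>i. Z i w)) w)"
      unfolding f_def alg_tau_star_def Let_def by (intro ext) simp
    ultimately show ?thesis by simp
  qed
  have N_m[measurable]: "(\<lambda>w. real (N_deg V E (f w))) \<in> borel_measurable M"
    by (rule N_deg_measurable[OF fin f_m])
  define m where "m = max (1/\<delta>) (2/\<beta>)"
  have m1: "m \<ge> 1/\<delta>" "m \<ge> 2/\<beta>" unfolding m_def by auto
  have mgt: "m > 1" using m1(1) del by (smt (verit) less_divide_eq_1_pos)
  have lnm: "ln m \<ge> 0" using mgt by simp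
  have expm: "exp (- ln m) = 1 / m" using mgt by (simp add: exp_minus exp_ln inverse_eq_divide)
  define t6 where "t6 = (2/\<epsilon>) * ln m + 1"
  have t6: "t6 \<ge> 0" unfolding t6_def using eps lnm by simp
  define F6 where "F6 = {w \<in> space M. Z 1 w \<le> - t6}"
  have F6s: "F6 \<in> events" unfolding F6_def by measurable
  have "prob F6 = exp (- t6 / (2/\<epsilon>)) / 2" unfolding F6_def
    by (rule lap_lower_tail[OF D1]) (use eps t6 in auto)
  also have "- t6 / (2/\<epsilon>) = - ln m - \<epsilon>/2" unfolding t6_def using eps by (simp add: field_simps)
  also have "exp (- ln m - \<epsilon>/2) \<le> exp (- ln m)" using eps by simp
  hence "exp (- ln m - \<epsilon>/2) / 2 \<le> 1 / (2*m)" using expm by simp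
  finally have P6: "prob F6 \<le> 1 / (2*m)" .
  have m2: "1 / (2*m) \<le> \<delta>/2" "1 / (2*m) \<le> \<beta>/4"
    using m1 del bet mgt by (auto simp: field_simps)
  define A2 where "A2 = {w \<in> space M. f w + real (N_deg V E (f w)) \<le> 2 * f w}"
  have A2s: "A2 \<in> events" unfolding A2_def by measurable
  have "space M - F6 \<subseteq> A2"
  proof
    fix w assume w: "w \<in> space M - F6"
    hence "Z 1 w > - ((2/\<epsilon>) * ln (max (1/\<delta>) (2/\<beta>)) + 1)" unfolding F6_def t6_def m_def by auto
    hence "alg_tau_star V E \<epsilon> \<beta> \<delta> (\<lambda>i. Z i w) + real (N_deg V E (alg_tau_star V E \<epsilon> \<beta> \<delta> (\<lambda>i. Z i w)))
          \<le> 2 * alg_tau_star V E \<epsilon> \<beta> \<delta> (\<lambda>i. Z i w)" by (intro det_second[OF fin]) simp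
    thus "w \<in> A2" using w unfolding A2_def f_def by auto
  qed
  hence "prob (space M - F6) \<le> prob A2" using A2s by (intro finite_measure_mono)
  hence claim2: "prob A2 \<ge> 1 - \<delta>" using prob_compl[OF F6s] P6 m2 del by linarith
  define k0 where "k0 = (LEAST k. max_deg E V \<le> 2 ^ k)"
  define a where "a = (4/\<epsilon>) * ln (4/\<beta>)"
  define c where "c = (8/\<epsilon>) * ln (real k0 + 1) + a"
  have lnb: "ln (4/\<beta>) \<ge> 0" using bet by simp
  have apos: "a \<ge> 0" unfolding a_def using eps lnb by simp
  have cpos: "c \<ge> 0" unfolding c_def using eps apos by simp
  have expb: "exp (- ln (4/\<beta>)) = \<beta>/4" using bet by (simp add: exp_minus exp_ln inverse_eq_divide)
  have ea: "exp (- a / (4/\<epsilon>)) / 2 = \<beta>/8"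
  proof -
    have "- a / (4/\<epsilon>) = - ln (4/\<beta>)" unfolding a_def using eps by (simp add: field_simps)
    thus ?thesis using expb by simp
  qed
  define F1 where "F1 = {w \<in> space M. Z 0 w \<ge> a}"
  define F2 where "F2 = {w \<in> space M. Z 0 w \<le> - a}"
  define F3 where "F3 = {w \<in> space M. Z (k0 + 2) w \<le> - a}"
  define F4i where "F4i k = {w \<in> space M. Z (k + 2) w \<ge> c}" for k
  define F4 where "F4 = (\<Union>k\<in>{..k0}. F4i k)"
  define F5 where "F5 = {w \<in> space M. Z 1 w \<ge> (2/\<epsilon>) * ln m}"
  have F1s: "F1 \<in> events" unfolding F1_def by measurable
  have F2s: "F2 \<in> events" unfolding F2_def by measurable
  have F3s: "F3 \<in> events" unfolding F3_def by measurable
  have F4is: "F4i k \<in> events" for k unfolding F4i_def by measurable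
  have F4s: "F4 \<in> events" unfolding F4_def using F4is by auto
  have F5s: "F5 \<in> events" unfolding F5_def by measurable
  have P1: "prob F1 = \<beta>/8" unfolding F1_def
    using lap_upper_tail[OF D0, of a] eps apos ea by simp
  have P2: "prob F2 = \<beta>/8" unfolding F2_def
    using lap_lower_tail[OF D0, of a] eps apos ea by simp
  have P3: "prob F3 = \<beta>/8" unfolding F3_def
    using lap_lower_tail[OF D2[of k0], of a] eps apos ea by simp
  have P4i: "prob (F4i k) = (\<beta>/8) / (real k0 + 1)^2" for k
  proof -
    have "prob (F4i k) = exp (- c / (4/\<epsilon>)) / 2" unfolding F4i_def
      using lap_upper_tail[OF D2, of c] eps cpos by simp
    also have "- c / (4/\<epsilon>) = - ln (4/\<beta>) + - (2 * ln (real k0 + 1))"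
      unfolding c_def a_def using eps by (simp add: field_simps)
    also have "exp (- ln (4/\<beta>) + - (2 * ln (real k0 + 1))) = (\<beta>/4) * (1 / (real k0 + 1)^2)"
    proof -
      define n where "n = real k0 + 1"
      have n0: "n > 0" unfolding n_def by simp
      have "ln (n^2) = 2 * ln n" using ln_realpow[of n 2] by simp
      hence e2: "exp (2 * ln n) = n^2" using n0 by (metis exp_ln zero_less_power)
      have "exp (- ln (4/\<beta>) + - (2 * ln n)) = exp (- ln (4/\<beta>)) * exp (- (2 * ln n))"
        by (rule exp_add)
      also have "exp (- (2 * ln n)) = 1 / n^2" unfolding exp_minus e2 by (rule inverse_eq_divide)
      finally show ?thesis unfolding n_def[symmetric] expb .
    qed
    finally show ?thesis by simp
  qed
  have "prob F4 \<le> (\<Sum>k\<in>{..k0}. prob (F4i k))" unfolding F4_def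
    by (rule finite_measure_subadditive_finite) (use F4is in auto)
  also have "\<dots> = (real k0 + 1) * ((\<beta>/8) / (real k0 + 1)^2)" using P4i by simp
  also have "\<dots> = (\<beta>/8) / (real k0 + 1)" using frac_sq[of "real k0 + 1" "\<beta>/8"] by simp
  also have "\<dots> \<le> (\<beta>/8) / 1" using bet by (intro divide_left_mono) auto
  finally have P4: "prob F4 \<le> \<beta>/8" by simp
  have P5: "prob F5 \<le> 1/(2*m)"
  proof -
    have "prob F5 = exp (- ((2/\<epsilon>) * ln m) / (2/\<epsilon>)) / 2" unfolding F5_def
      by (rule lap_upper_tail[OF D1]) (use eps lnm in auto)
    also have "- ((2/\<epsilon>) * ln m) / (2/\<epsilon>) = - ln m" using eps by simp
    finally show ?thesis using expm by simp
  qed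
  define F where "F = F1 \<union> (F2 \<union> (F3 \<union> (F4 \<union> (F5 \<union> F6))))"
  have "prob F \<le> prob F1 + (prob F2 + (prob F3 + (prob F4 + (prob F5 + prob F6))))"
  proof -
    have u: "\<And>A B. A \<in> events \<Longrightarrow> B \<in> events \<Longrightarrow> prob (A \<union> B) \<le> prob A + prob B"
      by (rule measure_Un_le)
    have s56: "F5 \<union> F6 \<in> events" using F5s F6s by (rule sets.Un)
    have s456: "F4 \<union> (F5 \<union> F6) \<in> events" using F4s s56 by (rule sets.Un)
    have s3456: "F3 \<union> (F4 \<union> (F5 \<union> F6)) \<in> events" using F3s s456 by (rule sets.Un)
    have s23456: "F2 \<union> (F3 \<union> (F4 \<union> (F5 \<union> F6))) \<in> events" using F2s s3456 by (rule sets.Un)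
    note u[OF F5s F6s] u[OF F4s s56] u[OF F3s s456] u[OF F2s s3456] u[OF F1s s23456]
    then show ?thesis unfolding F_def by linarith
  qed
  hence PF: "prob F \<le> \<beta>" using P1 P2 P3 P4 P5 P6 m2 by linarith
  have Fs: "F \<in> events" unfolding F_def using F1s F2s F3s F4s F5s F6s by auto
  define A1 where "A1 = {w \<in> space M.
            f w \<le> 2 * real (max_deg E V) + (8 / \<epsilon>) * ln (log 2 (4 * real (max_deg E V)))
                 + (16 / \<epsilon>) * ln (4 / \<beta>) + (4 / \<epsilon>) * ln (max (1 / \<delta>) (2 / \<beta>)) + 1
            \<and> real (N_deg V E (f w))
              \<le> (8 / \<epsilon>) * ln (log 2 (4 * real (max_deg E V))) + (16 / \<epsilon>) * ln (4 / \<beta>)}"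
  have A1s: "A1 \<in> events" unfolding A1_def by measurable
  have "space M - F \<subseteq> A1"
  proof
    fix w assume w: "w \<in> space M - F"
    have g3: "Z (k + 2) w < (8/\<epsilon>) * ln (real k0 + 1) + a" if "k \<le> k0" for k
    proof -
      have "w \<notin> F4i k" using w that unfolding F_def F4_def by auto
      thus ?thesis unfolding F4i_def c_def using w by auto
    qed
    have "alg_tau_star V E \<epsilon> \<beta> \<delta> (\<lambda>i. Z i w)
              \<le> 2 * real (max_deg E V) + (8 / \<epsilon>) * ln (log 2 (4 * real (max_deg E V)))
                 + (16 / \<epsilon>) * ln (4 / \<beta>) + (4 / \<epsilon>) * ln (max (1 / \<delta>) (2 / \<beta>)) + 1
            \<and> real (N_deg V E (alg_tau_star V E \<epsilon> \<beta> \<delta> (\<lambda>i. Z i w)))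
              \<le> (8 / \<epsilon>) * ln (log 2 (4 * real (max_deg E V))) + (16 / \<epsilon>) * ln (4 / \<beta>)"
    proof (rule det_first[OF G eps bet del k0_def a_def m_def])
      show "- a < Z 0 w" "Z 0 w < a" "Z (k0 + 2) w > - a"
        "Z 1 w > - ((2/\<epsilon>) * ln m + 1)" "Z 1 w < (2/\<epsilon>) * ln m"
        using w unfolding F_def F1_def F2_def F3_def F5_def F6_def t6_def by auto
    qed (use g3 in auto)
    thus "w \<in> A1" using w unfolding A1_def f_def by auto
  qed
  hence "prob (space M - F) \<le> prob A1" using A1s by (intro finite_measure_mono)
  hence claim1: "prob A1 \<ge> 1 - \<beta>" using prob_compl[OF Fs] PF by linarith
  show ?thesis using claim1 claim2 unfolding A1_def A2_def f_def by simp
qed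

end
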